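(* Let $G$ be a non-supergraceful graph having a semitotal labeling $\varphi$ with $1 \in N(\varphi)$. Then there is a connected supergraceful graph $H$ containing an induced subgraph isomorphic to $G$.
   Context: Graphs are finite, simple. For a labeling $\varphi: V(G) \to \mathbb{Z}_{>0}$ let $N(\varphi) = \{\varphi(x) : x \in V(G)\}$ and $E(\varphi) = \{|\varphi(x)-\varphi(y)| : xy \in E(G)\}$. A total labeling of a graph with $p$ nodes and $q$ edges is a map $\varphi$ such that the $p$ node labels and $q$ edge labels are pairwise distinct and $N(\varphi) \cup E(\varphi) = \{1,\dots,p+q\}$; a graph is supergraceful if it has one, non-supergraceful otherwise. For non-supergraceful $G$, let $q_0>0$ be the least integer such that there is a labeling with all node and edge labels pairwise distinct and $N(\varphi)\cup E(\varphi) \subseteq \{1,\dots,p+q+q_0\}$; such a labeling is a semitotal labeling. *)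

theory Defs
  imports Main
begin

definition simple_graph :: "'a set \<Rightarrow> 'a set set \<Rightarrow> bool" where
  "simple_graph V E \<longleftrightarrow> finite V \<and> (\<forall>e\<in>E. e \<subseteq> V \<and> card e = 2)"

definition edge_label :: "('a \<Rightarrow> nat) \<Rightarrow> 'a set \<Rightarrow> nat" where
  "edge_label \<phi> e = Max (\<phi> ` e) - Min (\<phi> ` e)"

definition distinct_labeling :: "'a set \<Rightarrow> 'a set set \<Rightarrow> ('a \<Rightarrow> nat) \<Rightarrow> bool" where
  "distinct_labeling V E \<phi> \<longleftrightarrow>
     (\<forall>x\<in>V. 0 < \<phi> x) \<and> inj_on \<phi> V \<and> inj_on (edge_label \<phi>) E \<and>
     \<phi> ` V \<inter> edge_label \<phi> ` E = {}"

definition total_labeling :: "'a set \<Rightarrow> 'a set set \<Rightarrow> ('a \<Rightarrow> nat) \<Rightarrow> bool" where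
  "total_labeling V E \<phi> \<longleftrightarrow> distinct_labeling V E \<phi> \<and>
     \<phi> ` V \<union> edge_label \<phi> ` E = {1..card V + card E}"

definition supergraceful :: "'a set \<Rightarrow> 'a set set \<Rightarrow> bool" where
  "supergraceful V E \<longleftrightarrow> (\<exists>\<phi>. total_labeling V E \<phi>)"

definition labeling_within :: "'a set \<Rightarrow> 'a set set \<Rightarrow> ('a \<Rightarrow> nat) \<Rightarrow> nat \<Rightarrow> bool" where
  "labeling_within V E \<phi> k \<longleftrightarrow> distinct_labeling V E \<phi> \<and>
     \<phi> ` V \<union> edge_label \<phi> ` E \<subseteq> {1..card V + card E + k}"

definition q0 :: "'a set \<Rightarrow> 'a set set \<Rightarrow> nat" where
  "q0 V E = (LEAST k. 0 < k \<and> (\<exists>\<phi>. labeling_within V E \<phi> k))"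

definition semitotal_labeling :: "'a set \<Rightarrow> 'a set set \<Rightarrow> ('a \<Rightarrow> nat) \<Rightarrow> bool" where
  "semitotal_labeling V E \<phi> \<longleftrightarrow> labeling_within V E \<phi> (q0 V E)"

definition node_labels :: "'a set \<Rightarrow> ('a \<Rightarrow> nat) \<Rightarrow> nat set" where
  "node_labels V \<phi> = \<phi> ` V"

definition connected_graph :: "'a set \<Rightarrow> 'a set set \<Rightarrow> bool" where
  "connected_graph V E \<longleftrightarrow>
     (\<forall>x\<in>V. \<forall>y\<in>V. (x, y) \<in> {(u, v). {u, v} \<in> E}\<^sup>*)"

definition has_induced_copy ::
  "'b set \<Rightarrow> 'b set set \<Rightarrow> 'a set \<Rightarrow> 'a set set \<Rightarrow> bool" where
  "has_induced_copy VH EH VG EG \<longleftrightarrow>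
     (\<exists>f. inj_on f VG \<and> f ` VG \<subseteq> VH \<and>
          (\<forall>x\<in>VG. \<forall>y\<in>VG. {x, y} \<in> EG \<longleftrightarrow> {f x, f y} \<in> EH))"

end

theory Submission
  imports Defs
begin

lemma el_pair: "edge_label id {a, b} = (if a \<le> b then b - a else a - b)"
  by (auto simp: edge_label_def max_def min_def)

definition VHd :: "nat set \<Rightarrow> nat set \<Rightarrow> nat \<Rightarrow> nat set" where
  "VHd A B M = (\<lambda>a. 2*a-1) ` A \<union> {4*M+1} \<union> (\<lambda>k. 4*M+1-2*k) ` A
     \<union> (\<lambda>k. 2*k) ` ({1..M}-A-B) \<union> (\<lambda>k. 4*M+2-2*k) ` ({1..M}-A)"

definition EHd :: "nat set \<Rightarrow> nat set \<Rightarrow> nat \<Rightarrow> nat set set \<Rightarrow> nat set set" where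
  "EHd A B M E1 = E1 \<union> (\<lambda>a. {4*M+1, 2*a-1}) ` A \<union> (\<lambda>k. {4*M+1, 4*M+1-2*k}) ` A
     \<union> (\<lambda>k. {1, 2*k}) ` ({1..M}-A-B) \<union> (\<lambda>k. {1, 4*M+2-2*k}) ` ({1..M}-A)
     \<union> (\<lambda>k. {4*M+1, 4*M+2-2*k}) ` B"

definition recd :: "nat set \<Rightarrow> nat \<Rightarrow> nat set set \<Rightarrow> nat \<Rightarrow> nat set" where
  "recd B M E1 l = (if even l \<and> l \<le> 2*M \<and> l div 2 \<in> B then inv_into E1 (edge_label id) l
     else if (odd l \<and> l \<le> 2*M \<and> (l+1) div 2 \<in> B) \<or> even l then {4*M+1, 4*M+1-l} else {1, l+1})"

locale core =
  fixes A B :: "nat set" and M :: nat and E1 :: "nat set set"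
  assumes A: "A \<subseteq> {1..M}" and B: "B \<subseteq> {1..M}" and AB: "A \<inter> B = {}" and A1: "1 \<in> A"
    and E1: "\<forall>e\<in>E1. \<exists>a\<in>A. \<exists>b\<in>A. a < b \<and> e = {2*a-1, 2*b-1}"
    and E1inj: "inj_on (edge_label id) E1"
    and E1lab: "edge_label id ` E1 = (\<lambda>j. 2*j) ` B"
begin

lemma finA: "finite A" using A finite_subset by blast
lemma finB: "finite B" using B finite_subset by blast
lemma finE1: "finite E1"
proof -
  have "E1 \<subseteq> (\<lambda>(a,b). {2*a-1, 2*b-1::nat}) ` (A \<times> A)" using E1 by fastforce
  then show ?thesis using finA finite_subset by blast
qed

lemma E1lab2: "e \<in> E1 \<Longrightarrow> \<exists>j\<in>B. edge_label id e = 2*j"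
  using E1lab by blast

lemma inV1: "a \<in> A \<Longrightarrow> 2*a-1 \<in> VHd A B M" unfolding VHd_def by blast
lemma inV2: "4*M+1 \<in> VHd A B M" unfolding VHd_def by blast
lemma inV3: "a \<in> A \<Longrightarrow> 4*M+1-2*a \<in> VHd A B M" unfolding VHd_def by blast
lemma inV4: "k \<in> {1..M}-A-B \<Longrightarrow> 2*k \<in> VHd A B M" unfolding VHd_def by blast
lemma inV5: "k \<in> {1..M}-A \<Longrightarrow> 4*M+2-2*k \<in> VHd A B M" unfolding VHd_def by blast

lemma card2: "(x::nat) \<noteq> y \<Longrightarrow> card {x,y} = 2" by simp

lemma simple: "simple_graph (VHd A B M) (EHd A B M E1)"
proof -
  have "finite (VHd A B M)" unfolding VHd_def using finA by auto
  moreover have "\<forall>e\<in>EHd A B M E1. e \<subseteq> VHd A B M \<and> card e = 2"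
  proof
    fix e assume e: "e \<in> EHd A B M E1"
    then consider "e \<in> E1" | a where "a \<in> A" "e = {4*M+1, 2*a-1}"
      | a where "a \<in> A" "e = {4*M+1, 4*M+1-2*a}"
      | a where "a \<in> {1..M}-A-B" "e = {1, 2*a}"
      | a where "a \<in> {1..M}-A" "e = {1, 4*M+2-2*a}"
      | a where "a \<in> B" "e = {4*M+1, 4*M+2-2*a}"
      unfolding EHd_def by blast
    then show "e \<subseteq> VHd A B M \<and> card e = 2"
    proof cases
      case 1
      then obtain a b where "a \<in> A" "b \<in> A" "a < b" "e = {2*a-1, 2*b-1}" using E1 by blast
      moreover have "a \<ge> 1" using A \<open>a \<in> A\<close> by auto
      ultimately show ?thesis using inV1 card2[of "2*a-1" "2*b-1"] by auto
    next
      case 2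
      moreover have "a \<le> M" using A 2 by auto
      ultimately show ?thesis using inV1 inV2 card2[of "4*M+1" "2*a-1"] by auto
    next
      case 3
      moreover have "a \<le> M" "a \<ge> 1" using A 3 by auto
      ultimately show ?thesis using inV3 inV2 card2[of "4*M+1" "4*M+1-2*a"] by auto
    next
      case 4
      then show ?thesis using inV1[OF A1] inV4 card2[of 1 "2*a"] by auto
    next
      case 5
      then show ?thesis using inV1[OF A1] inV5 card2[of 1 "4*M+2-2*a"] by auto
    next
      case 6
      moreover have "a \<le> M" "a \<ge> 1" "a \<notin> A" using B AB 6 by auto
      ultimately show ?thesis using inV5[of a] inV2 card2[of "4*M+1" "4*M+2-2*a"] by auto
    qed
  qed
  ultimately show ?thesis unfolding simple_graph_def by blast
qed

lemma EH_cases: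
  assumes "e \<in> EHd A B M E1"
  obtains "e \<in> E1" | a where "a \<in> A" "e = {4*M+1, 2*a-1}"
      | a where "a \<in> A" "e = {4*M+1, 4*M+1-2*a}"
      | a where "a \<in> {1..M}-A-B" "e = {1, 2*a}"
      | a where "a \<in> {1..M}-A" "e = {1, 4*M+2-2*a}"
      | a where "a \<in> B" "e = {4*M+1, 4*M+2-2*a}"
  using assms unfolding EHd_def by blast

lemma inE2: "a \<in> A \<Longrightarrow> {4*M+1, 2*a-1} \<in> EHd A B M E1" unfolding EHd_def by blast
lemma inE3: "a \<in> A \<Longrightarrow> {4*M+1, 4*M+1-2*a} \<in> EHd A B M E1" unfolding EHd_def by blast
lemma inE4: "a \<in> {1..M}-A-B \<Longrightarrow> {1, 2*a} \<in> EHd A B M E1" unfolding EHd_def by blast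
lemma inE5: "a \<in> {1..M}-A \<Longrightarrow> {1, 4*M+2-2*a} \<in> EHd A B M E1" unfolding EHd_def by blast
lemma inE6: "a \<in> B \<Longrightarrow> {4*M+1, 4*M+2-2*a} \<in> EHd A B M E1" unfolding EHd_def by blast
lemma inE1: "e \<in> E1 \<Longrightarrow> e \<in> EHd A B M E1" unfolding EHd_def by blast

lemma V_cases:
  assumes "v \<in> VHd A B M"
  obtains a where "a \<in> A" "v = 2*a-1" | "v = 4*M+1"
      | a where "a \<in> A" "v = 4*M+1-2*a"
      | a where "a \<in> {1..M}-A-B" "v = 2*a"
      | a where "a \<in> {1..M}-A" "v = 4*M+2-2*a"
  using assms unfolding VHd_def by blast

abbreviation "R \<equiv> {(u, v). {u, v} \<in> EHd A B M E1}"

lemma R2: "{u, v} \<in> EHd A B M E1 \<Longrightarrow> (u, v) \<in> R\<^sup>* \<and> (v, u) \<in> R\<^sup>*"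
  by (auto simp: insert_commute)

lemma conn_N: "v \<in> VHd A B M \<Longrightarrow> (v, 4*M+1) \<in> R\<^sup>* \<and> (4*M+1, v) \<in> R\<^sup>*"
proof -
  have N1: "(1, 4*M+1) \<in> R\<^sup>* \<and> (4*M+1, 1) \<in> R\<^sup>*" using R2[OF inE2[OF A1]] by simp
  assume "v \<in> VHd A B M"
  then show ?thesis
  proof (cases rule: V_cases)
    case (1 a) then show ?thesis using R2[OF inE2[of a]] by (auto simp: insert_commute)
  next
    case 2 then show ?thesis by simp
  next
    case (3 a) then show ?thesis using R2[OF inE3[of a]] by (auto simp: insert_commute)
  next
    case (4 a) then show ?thesis using R2[OF inE4[of a]] N1 by (meson rtrancl_trans)
  next
    case (5 a) then show ?thesis using R2[OF inE5[of a]] N1 by (meson rtrancl_trans)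
  qed
qed

lemma connected: "connected_graph (VHd A B M) (EHd A B M E1)"
  unfolding connected_graph_def using conn_N by (meson rtrancl_trans)


lemma notV:
  assumes "l \<le> 4*M" "l \<ge> 1"
    and "odd l \<Longrightarrow> l \<le> 2*M \<Longrightarrow> (l+1) div 2 \<notin> A"
    and "even l \<Longrightarrow> l \<le> 2*M \<Longrightarrow> l div 2 \<notin> {1..M}-A-B"
    and "odd l \<Longrightarrow> l > 2*M \<Longrightarrow> (4*M+1-l) div 2 \<notin> A"
    and "even l \<Longrightarrow> l > 2*M \<Longrightarrow> (4*M+2-l) div 2 \<notin> {1..M}-A"
  shows "l \<notin> VHd A B M"
proof
  assume "l \<in> VHd A B M"
  then show False
  proof (cases rule: V_cases)
    case (1 a) then have "a \<le> M" "a \<ge> 1" using A by auto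
    with 1 have "odd l" "l \<le> 2*M" "(l+1) div 2 = a" by auto
    with 1 assms(3) show False by simp
  next
    case 2 with assms show False by simp
  next
    case (3 a) then have "a \<le> M" "a \<ge> 1" using A by auto
    with 3 have "odd l" "l > 2*M" "(4*M+1-l) div 2 = a" by auto
    with 3 assms(5) show False by simp
  next
    case (4 a) with assms(4) show False by simp
  next
    case (5 a) then have "a \<le> M" "a \<ge> 1" by auto
    with 5 have "even l" "l > 2*M" "(4*M+2-l) div 2 = a" by auto
    with 5 assms(6) show False by simp
  qed
qed

lemma lab:
  assumes "e \<in> EHd A B M E1"
  shows "recd B M E1 (edge_label id e) = e \<and> edge_label id e \<notin> VHd A B M
     \<and> edge_label id e \<in> {1..4*M+1}"
  using assms
proof (cases rule: EH_cases)
  case 1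
  then obtain j where j: "j \<in> B" "edge_label id e = 2*j" using E1lab by blast
  have jM: "j \<le> M" "j \<ge> 1" using j B by auto
  have "recd B M E1 (edge_label id e) = e"
    unfolding recd_def using j jM 1 E1inj by (simp, metis inv_into_f_f)
  moreover have "edge_label id e \<notin> VHd A B M"
    unfolding j(2) apply (rule notV) using j jM by auto
  ultimately show ?thesis using j jM by auto
next
  case (2 a)
  have aM: "a \<le> M" "a \<ge> 1" using 2 A by auto
  have L: "edge_label id e = 4*M+2-2*a" using aM 2 by (simp add: el_pair)
  have "recd B M E1 (edge_label id e) = e"
    unfolding recd_def L using aM 2 by (auto simp: insert_commute)
  moreover have "edge_label id e \<notin> VHd A B M"
    unfolding L apply (rule notV) using aM 2 by auto
  ultimately show ?thesis using aM L by auto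
next
  case (3 a)
  have aM: "a \<le> M" "a \<ge> 1" "a \<notin> B" using 3 A AB by auto
  have L: "edge_label id e = 2*a" using aM 3 by (simp add: el_pair)
  have "recd B M E1 (edge_label id e) = e"
    unfolding recd_def L using aM 3 by (auto simp: insert_commute)
  moreover have "edge_label id e \<notin> VHd A B M"
    unfolding L apply (rule notV) using aM 3 by auto
  ultimately show ?thesis using aM L by auto
next
  case (4 a)
  have aM: "a \<le> M" "a \<ge> 1" "a \<notin> B" "a \<notin> A" using 4 by auto
  have L: "edge_label id e = 2*a - 1" using aM 4 by (simp add: el_pair)
  have "recd B M E1 (edge_label id e) = e"
    unfolding recd_def L using aM 4 by auto
  moreover have "edge_label id e \<notin> VHd A B M"
    unfolding L apply (rule notV) using aM 4 by auto
  ultimately show ?thesis using aM L by auto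
next
  case (5 a)
  have aM: "a \<le> M" "a \<ge> 1" "a \<notin> A" using 5 by auto
  have L: "edge_label id e = 4*M+1-2*a" using aM 5 by (simp add: el_pair)
  have "recd B M E1 (edge_label id e) = e"
    unfolding recd_def L using aM 5 by auto
  moreover have "edge_label id e \<notin> VHd A B M"
    unfolding L apply (rule notV) using aM 5 by auto
  ultimately show ?thesis using aM L by auto
next
  case (6 a)
  have aM: "a \<le> M" "a \<ge> 1" "a \<notin> A" using 6 B AB by auto
  have L: "edge_label id e = 2*a-1" using aM 6 by (simp add: el_pair)
  have "recd B M E1 (edge_label id e) = e"
    unfolding recd_def L using aM 6 by (auto simp: insert_commute)
  moreover have "edge_label id e \<notin> VHd A B M"
    unfolding L apply (rule notV) using aM 6 by auto
  ultimately show ?thesis using aM L by auto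
qed


lemma cover:
  assumes l: "l \<in> {1..4*M+1}"
  shows "l \<in> VHd A B M \<union> edge_label id ` EHd A B M E1"
proof -
  have l1: "1 \<le> l" "l \<le> 4*M+1" using l by auto
  consider "l = 4*M+1" | "l \<le> 2*M" "odd l" | "l \<le> 2*M" "even l"
    | "2*M < l" "l \<le> 4*M" "odd l" | "2*M < l" "l \<le> 4*M" "even l" using l by force
  then show ?thesis
  proof cases
    case 1 then show ?thesis using inV2 by blast
  next
    case 2
    define k where "k = (l+1) div 2"
    have k: "l = 2*k-1" "k \<ge> 1" "k \<le> M" using 2 l1 unfolding k_def by presburger+
    consider "k \<in> A" | "k \<in> B" | "k \<in> {1..M}-A-B" using k by auto
    then show ?thesis
    proof cases
      case 1 then show ?thesis using inV1 k by blast
    next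
      case 3
      have "edge_label id {1, 2*k} = l" using k by (simp add: el_pair)
      then show ?thesis using inE4[OF 3] by force
    next
      case 4: 2
      have "edge_label id {4*M+1, 4*M+2-2*k} = l" using k by (simp add: el_pair)
      then show ?thesis using inE6[OF 4] by force
    qed
  next
    case 3
    define k where "k = l div 2"
    have k: "l = 2*k" "k \<ge> 1" "k \<le> M" using 3 l1 unfolding k_def by presburger+
    consider "k \<in> A" | "k \<in> B" | "k \<in> {1..M}-A-B" using k by auto
    then show ?thesis
    proof cases
      case 1
      have "edge_label id {4*M+1, 4*M+1-2*k} = l" using k by (simp add: el_pair)
      then show ?thesis using inE3[OF 1] by force
    next
      case 2
      then have "l \<in> edge_label id ` E1" using E1lab k by auto
      then show ?thesis using inE1 by blast
    next
      case 4: 3 then show ?thesis using inV4 k by blast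
    qed
  next
    case 4
    define k where "k = (4*M+1-l) div 2"
    have k: "l = 4*M+1-2*k" "k \<ge> 1" "k \<le> M" using 4 l1 unfolding k_def by presburger+
    consider "k \<in> A" | "k \<in> {1..M}-A" using k by auto
    then show ?thesis
    proof cases
      case 1 then show ?thesis using inV3 k by blast
    next
      case 2
      have "edge_label id {1, 4*M+2-2*k} = l" using k by (simp add: el_pair)
      then show ?thesis using inE5[OF 2] by force
    qed
  next
    case 5
    define k where "k = (4*M+2-l) div 2"
    have k: "l = 4*M+2-2*k" "k \<ge> 1" "k \<le> M" using 5 l1 unfolding k_def by presburger+
    consider "k \<in> A" | "k \<in> {1..M}-A" using k by auto
    then show ?thesis
    proof cases
      case 1
      have "edge_label id {4*M+1, 2*k-1} = l" using k by (simp add: el_pair)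
      then show ?thesis using inE2[OF 1] by force
    next
      case 2 then show ?thesis using inV5 k by blast
    qed
  qed
qed

lemma Vrange: assumes "v \<in> VHd A B M" shows "v \<in> {1..4*M+1}"
  using assms
proof (cases rule: V_cases)
  case (1 a) then have "a \<ge> 1" "a \<le> M" using A by auto
  with 1 show ?thesis by auto
next
  case (3 a) then have "a \<ge> 1" "a \<le> M" using A by auto
  with 3 show ?thesis by auto
qed auto

lemma finEH: "finite (EHd A B M E1)"
  unfolding EHd_def using finA finB finE1 by auto

lemma total: "total_labeling (VHd A B M) (EHd A B M E1) id"
proof -
  let ?V = "VHd A B M" and ?E = "EHd A B M E1"
  have inj: "inj_on (edge_label id) ?E"
    by (rule inj_on_inverseI[where g = "recd B M E1"]) (use lab in blast)
  have disj: "?V \<inter> edge_label id ` ?E = {}" using lab by blast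
  have un: "?V \<union> edge_label id ` ?E = {1..4*M+1}"
    using cover Vrange lab by blast
  have finV: "finite ?V" using simple unfolding simple_graph_def by blast
  have "card (?V \<union> edge_label id ` ?E) = card ?V + card ?E"
    using card_Un_disjoint[OF finV finite_imageI[OF finEH] disj] card_image[OF inj] by simp
  then have "card ?V + card ?E = 4*M+1" using un by simp
  moreover have "\<forall>x\<in>?V. 0 < id x" using Vrange by fastforce
  ultimately show ?thesis unfolding total_labeling_def distinct_labeling_def
    using inj disj un by simp
qed

lemma super: "supergraceful (VHd A B M) (EHd A B M E1)"
  unfolding supergraceful_def using total by blast


end

lemma el_pairf: "edge_label f {x, y} = (if f x \<le> f y then f y - f x else f x - f y)"
  by (auto simp: edge_label_def max_def min_def)

theorem theorem8p8:
  fixes V :: "'a set" and E :: "'a set set" and \<phi> :: "'a \<Rightarrow> nat"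
  assumes "simple_graph V E"
    and "\<not> supergraceful V E"
    and "semitotal_labeling V E \<phi>"
    and "1 \<in> node_labels V \<phi>"
  shows "\<exists>(VH :: nat set) EH. simple_graph VH EH \<and> connected_graph VH EH \<and>
           supergraceful VH EH \<and> has_induced_copy VH EH V E"
proof -
  define M where "M = card V + card E + q0 V E"
  have Ed: "\<forall>e\<in>E. e \<subseteq> V \<and> card e = 2" using assms(1) unfolding simple_graph_def by blast
  have lw: "labeling_within V E \<phi> (q0 V E)" using assms(3) unfolding semitotal_labeling_def by blast
  have pos: "\<forall>x\<in>V. 0 < \<phi> x" and injV: "inj_on \<phi> V" and injE: "inj_on (edge_label \<phi>) E"
    and disj: "\<phi> ` V \<inter> edge_label \<phi> ` E = {}"
    and bnd: "\<phi> ` V \<union> edge_label \<phi> ` E \<subseteq> {1..M}"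
    using lw unfolding labeling_within_def distinct_labeling_def M_def by blast+
  define A where "A = \<phi> ` V"
  define B where "B = edge_label \<phi> ` E"
  define \<psi> where "\<psi> = (\<lambda>x. 2 * \<phi> x - 1)"
  define E1 where "E1 = (\<lambda>e. \<psi> ` e) ` E"
  have epair: "\<exists>x y. e = {x, y} \<and> x \<in> V \<and> y \<in> V \<and> x \<noteq> y" if "e \<in> E" for e
    using Ed that by (metis card_2_iff insert_subset)
  have lab1: "edge_label id (\<psi> ` e) = 2 * edge_label \<phi> e" if eE: "e \<in> E" for e
  proof -
    obtain x y where xy: "e = {x, y}" "x \<in> V" "y \<in> V" "x \<noteq> y" using epair[OF eE] by blast
    have "\<phi> x \<ge> 1" "\<phi> y \<ge> 1" using pos xy by auto
    then show ?thesis unfolding xy(1) \<psi>_def by (simp add: el_pair el_pairf right_diff_distrib')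
  qed
  have c: "core A B M E1"
  proof
    show "A \<subseteq> {1..M}" "B \<subseteq> {1..M}" using bnd unfolding A_def B_def by auto
    show "A \<inter> B = {}" using disj unfolding A_def B_def .
    show "1 \<in> A" using assms(4) unfolding A_def node_labels_def .
    show "\<forall>e\<in>E1. \<exists>a\<in>A. \<exists>b\<in>A. a < b \<and> e = {2*a-1, 2*b-1}"
    proof
      fix e' assume "e' \<in> E1"
      then obtain e where e: "e \<in> E" "e' = \<psi> ` e" unfolding E1_def by blast
      obtain x y where xy: "e = {x, y}" "x \<in> V" "y \<in> V" "x \<noteq> y" using epair[OF e(1)] by blast
      have ne: "\<phi> x \<noteq> \<phi> y" using injV xy inj_on_def by metis
      show "\<exists>a\<in>A. \<exists>b\<in>A. a < b \<and> e' = {2*a-1, 2*b-1}"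
      proof (cases "\<phi> x < \<phi> y")
        case True then show ?thesis using xy e unfolding A_def \<psi>_def by auto
      next
        case False then have "\<phi> y < \<phi> x" using ne by auto
        then show ?thesis using xy e unfolding A_def \<psi>_def by (auto simp: insert_commute)
      qed
    qed
    show "inj_on (edge_label id) E1"
    proof (rule inj_onI)
      fix e1 e2 assume "e1 \<in> E1" "e2 \<in> E1" and eq: "edge_label id e1 = edge_label id e2"
      then obtain f1 f2 where f: "f1 \<in> E" "f2 \<in> E" "e1 = \<psi> ` f1" "e2 = \<psi> ` f2" unfolding E1_def by blast
      then have "edge_label \<phi> f1 = edge_label \<phi> f2" using eq lab1 by simp
      then have "f1 = f2" using injE f inj_on_def by metis
      then show "e1 = e2" using f by simp
    qed
    show "edge_label id ` E1 = (\<lambda>j. 2*j) ` B"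
      unfolding E1_def B_def image_image using lab1 by (auto intro: image_eqI)
  qed
  interpret core A B M E1 by (rule c)
  have psi: "odd (\<psi> x) \<and> \<psi> x < 4*M+1 \<and> \<psi> x \<in> VHd A B M" if "x \<in> V" for x
  proof -
    have "\<phi> x \<ge> 1" "\<phi> x \<le> M" using bnd pos that by auto
    moreover have "\<phi> x \<in> A" using that unfolding A_def by blast
    ultimately show ?thesis unfolding \<psi>_def using inV1 by auto
  qed
  have injpsi: "inj_on \<psi> V"
  proof (rule inj_onI)
    fix x y assume "x \<in> V" "y \<in> V" "\<psi> x = \<psi> y"
    then have "\<phi> x = \<phi> y" using pos unfolding \<psi>_def by fastforce
    then show "x = y" using injV \<open>x \<in> V\<close> \<open>y \<in> V\<close> inj_on_def by metis
  qed
  have ind: "has_induced_copy (VHd A B M) (EHd A B M E1) V E"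
    unfolding has_induced_copy_def
  proof (intro exI conjI ballI)
    show "inj_on \<psi> V" by (rule injpsi)
    show "\<psi> ` V \<subseteq> VHd A B M" using psi by blast
    fix x y assume x: "x \<in> V" and y: "y \<in> V"
    show "{x, y} \<in> E \<longleftrightarrow> {\<psi> x, \<psi> y} \<in> EHd A B M E1"
    proof
      assume "{x, y} \<in> E"
      then have "\<psi> ` {x, y} \<in> E1" unfolding E1_def by blast
      then show "{\<psi> x, \<psi> y} \<in> EHd A B M E1" using inE1 by simp
    next
      assume h: "{\<psi> x, \<psi> y} \<in> EHd A B M E1"
      have bad: False if "u \<in> {\<psi> x, \<psi> y}" "even u \<or> u = 4*M+1" for u
        using that psi[OF x] psi[OF y] by auto
      from h show "{x, y} \<in> E"
      proof (cases rule: EH_cases)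
        case 1
        then obtain e where e: "e \<in> E" "{\<psi> x, \<psi> y} = \<psi> ` e" unfolding E1_def by blast
        then have "\<psi> ` e = \<psi> ` {x, y}" by simp
        moreover have "e \<subseteq> V" using Ed e by blast
        ultimately have "e = {x, y}" using injpsi x y inj_on_image_eq_iff[of \<psi> V e "{x,y}"] by simp
        then show ?thesis using e by simp
      next
        case (2 a) then show ?thesis using bad[of "4*M+1"] by auto
      next
        case (3 a) then show ?thesis using bad[of "4*M+1"] by auto
      next
        case (4 a) then show ?thesis using bad[of "2*a"] by auto
      next
        case (5 a) then have "a \<le> M" by auto
        then have "even (4*M+2-2*a)" by presburger
        then show ?thesis using 5 bad[of "4*M+2-2*a"] by auto
      next
        case (6 a) then show ?thesis using bad[of "4*M+1"] by auto
      qed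
    qed
  qed
  show ?thesis using simple connected super ind by blast
qed

end
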